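(* Let $n\in\mathbb{N}$ and let $R$ be a ring such that $(r^n-1)((r-1)^n-1)=0$ for all $r\in R$. Then: (1) $\mathrm{char}(R)=|1\cdot\mathbb{Z}|$ is finite and $J(R)$ is a nil ideal; (2) if $n$ is odd, then $R$ is a reduced ring of characteristic $2$ and $J(R)=0$; (3) if $R$ is an algebra over a field $F$, then either $R$ is abelian or $\mathrm{char}(F)$ divides $n$.
   Context: All rings are associative with identity; $J(R)$ is the Jacobson radical and $\mathrm{char}(R):=|1\cdot\mathbb{Z}|$. A ring is reduced if it has no nonzero nilpotent elements, and abelian if all its idempotents are central. *)

theory Defs
  imports Main
begin

definition left_ideal :: "'a::ring_1 set \<Rightarrow> bool" where
  "left_ideal I \<longleftrightarrow> 0 \<in> I \<and> (\<forall>x\<in>I. \<forall>y\<in>I. x + y \<in> I) \<and> (\<forall>x\<in>I. - x \<in> I)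
     \<and> (\<forall>r. \<forall>x\<in>I. r * x \<in> I)"

definition ideal2 :: "'a::ring_1 set \<Rightarrow> bool" where
  "ideal2 I \<longleftrightarrow> left_ideal I \<and> (\<forall>r. \<forall>x\<in>I. x * r \<in> I)"

definition maximal_left_ideal :: "'a::ring_1 set \<Rightarrow> bool" where
  "maximal_left_ideal M \<longleftrightarrow> left_ideal M \<and> M \<noteq> UNIV \<and>
     (\<forall>I. left_ideal I \<and> M \<subseteq> I \<and> I \<noteq> UNIV \<longrightarrow> I = M)"

text \<open>Jacobson radical: intersection of all maximal left ideals (UNIV if there are none).\<close>
definition jacobson :: "'a::ring_1 set" where
  "jacobson = \<Inter> {M. maximal_left_ideal M}"

definition nil_set :: "'a::ring_1 set \<Rightarrow> bool" where
  "nil_set I \<longleftrightarrow> (\<forall>x\<in>I. \<exists>k. x ^ k = 0)"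

definition reduced_ring :: "'a::ring_1 itself \<Rightarrow> bool" where
  "reduced_ring _ \<longleftrightarrow> (\<forall>(x::'a) k. x ^ k = 0 \<longrightarrow> x = 0)"

definition abelian_ring :: "'a::ring_1 itself \<Rightarrow> bool" where
  "abelian_ring _ \<longleftrightarrow> (\<forall>e::'a. e * e = e \<longrightarrow> (\<forall>x. e * x = x * e))"

text \<open>char(R) := |1 * Z|, the cardinality of the additive subgroup generated by 1.\<close>
definition char_set :: "'a::ring_1 itself \<Rightarrow> 'a set" where
  "char_set _ = range (of_int :: int \<Rightarrow> 'a)"

definition is_algebra :: "('f::field \<Rightarrow> 'a::ring_1 \<Rightarrow> 'a) \<Rightarrow> bool" where
  "is_algebra sc \<longleftrightarrow>
     (\<forall>c x y. sc c (x + y) = sc c x + sc c y) \<and>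
     (\<forall>c d x. sc (c + d) x = sc c x + sc d x) \<and>
     (\<forall>c d x. sc c (sc d x) = sc (c * d) x) \<and>
     (\<forall>x. sc 1 x = x) \<and>
     (\<forall>c x y. sc c (x * y) = sc c x * y) \<and>
     (\<forall>c x y. sc c (x * y) = x * sc c y)"

end

theory Submission
  imports Defs
begin

definition spanx :: "'a::ring_1 \<Rightarrow> nat \<Rightarrow> 'a set" where
  "spanx x d = {y. \<exists>c::nat\<Rightarrow>int. y = (\<Sum>i<d. of_int (c i) * x ^ i)}"

lemma span_add: "y \<in> spanx x d \<Longrightarrow> z \<in> spanx x d \<Longrightarrow> y + z \<in> spanx x d"
  unfolding spanx_def
proof clarify
  fix c1 c2 :: "nat \<Rightarrow> int"
  show "\<exists>c. (\<Sum>i<d. of_int (c1 i) * x ^ i) + (\<Sum>i<d. of_int (c2 i) * x ^ i) = (\<Sum>i<d. of_int (c i) * x ^ i)"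
    by (rule exI[of _ "\<lambda>i. c1 i + c2 i"]) (simp add: sum.distrib distrib_right)
qed

lemma span_smult: "y \<in> spanx x d \<Longrightarrow> of_int k * y \<in> spanx x d"
  unfolding spanx_def
proof clarify
  fix c :: "nat \<Rightarrow> int"
  show "\<exists>c'. of_int k * (\<Sum>i<d. of_int (c i) * x ^ i) = (\<Sum>i<d. of_int (c' i) * x ^ i)"
    by (rule exI[of _ "\<lambda>i. k * c i"]) (simp add: sum_distrib_left mult.assoc)
qed

lemma span_uminus: "y \<in> spanx x d \<Longrightarrow> - y \<in> spanx x d"
  using span_smult[of y x d "-1"] by simp

lemma span_diff: "y \<in> spanx x d \<Longrightarrow> z \<in> spanx x d \<Longrightarrow> y - z \<in> spanx x d"
  using span_add[of y x d "-z"] span_uminus[of z x d] by simp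

lemma span_pow: "i < d \<Longrightarrow> x ^ i \<in> spanx x d"
  unfolding spanx_def
proof clarify
  assume "i < d"
  have "(\<Sum>j<d. of_int (if j = i then 1 else 0) * x ^ j) = (\<Sum>j<d. if j = i then x ^ j else 0)"
    by (rule sum.cong) auto
  also have "\<dots> = x ^ i" using \<open>i < d\<close> by (simp add: sum.delta')
  finally show "\<exists>c. x ^ i = (\<Sum>j<d. of_int (c j) * x ^ j)" by metis
qed

lemma span_zero: "0 \<in> spanx x d"
  unfolding spanx_def by (rule CollectI, rule exI[of _ "\<lambda>i. 0"]) simp

lemma span_mono: "d \<le> d' \<Longrightarrow> y \<in> spanx x d \<Longrightarrow> y \<in> spanx x d'"
  unfolding spanx_def
proof clarify
  fix c :: "nat \<Rightarrow> int"
  assume "d \<le> d'"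
  have "(\<Sum>i<d'. of_int (if i < d then c i else 0) * x ^ i) = (\<Sum>i<d. of_int (if i < d then c i else 0) * x ^ i)"
    by (rule sum.mono_neutral_right) (use \<open>d \<le> d'\<close> in auto)
  also have "\<dots> = (\<Sum>i<d. of_int (c i) * x ^ i)" by (rule sum.cong) auto
  finally show "\<exists>c'. (\<Sum>i<d. of_int (c i) * x ^ i) = (\<Sum>i<d'. of_int (c' i) * x ^ i)" by metis
qed

lemma span_xmult: "y \<in> spanx x d \<Longrightarrow> x * y \<in> spanx x (Suc d)"
  unfolding spanx_def
proof clarify
  fix c :: "nat \<Rightarrow> int"
  let ?c = "\<lambda>i. if i = 0 then 0 else c (i - 1)"
  have "(\<Sum>i<Suc d. of_int (?c i) * x ^ i) = (\<Sum>i<d. of_int (c i) * x ^ Suc i)"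
    by (subst sum.lessThan_Suc_shift) simp
  also have "\<dots> = x * (\<Sum>i<d. of_int (c i) * x ^ i)"
    unfolding sum_distrib_left
    by (rule sum.cong) (simp, metis mult.assoc mult_of_int_commute power_Suc)
  finally show "\<exists>c'. x * (\<Sum>i<d. of_int (c i) * x ^ i) = (\<Sum>i<Suc d. of_int (c' i) * x ^ i)" by metis
qed

lemma span_comm: "y \<in> spanx x d \<Longrightarrow> x * y = y * x"
  unfolding spanx_def
proof clarify
  fix c :: "nat \<Rightarrow> int"
  show "x * (\<Sum>i<d. of_int (c i) * x ^ i) = (\<Sum>i<d. of_int (c i) * x ^ i) * x"
    unfolding sum_distrib_left sum_distrib_right
    by (rule sum.cong) (simp, metis mult.assoc mult_of_int_commute power_Suc power_Suc2)
qed

lemma span_powmult: "y \<in> spanx x b \<Longrightarrow> x ^ a * y \<in> spanx x (a + b)"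
proof (induction a)
  case 0 then show ?case by simp
next
  case (Suc a)
  then show ?case using span_xmult[of "x ^ a * y" x "a + b"] by (simp add: mult.assoc)
qed

lemma span_shrink: "x ^ d \<in> spanx x d \<Longrightarrow> y \<in> spanx x (Suc d) \<Longrightarrow> y \<in> spanx x d"
  unfolding spanx_def[of x "Suc d"]
proof clarify
  fix c :: "nat \<Rightarrow> int"
  assume h: "x ^ d \<in> spanx x d"
  have "(\<Sum>i<d. of_int (c i) * x ^ i) \<in> spanx x d" unfolding spanx_def by blast
  then show "(\<Sum>i<Suc d. of_int (c i) * x ^ i) \<in> spanx x d"
    using span_add[OF _ span_smult[OF h]] by (simp only: sum.lessThan_Suc)
qed

lemma span_finite:
  assumes "of_int m = (0::'a::ring_1)" "m > 0"
  shows "finite (spanx (x::'a) d)"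
proof -
  let ?f = "\<lambda>cs. \<Sum>i<d. of_int (cs ! i) * x ^ i"
  have "spanx x d \<subseteq> ?f ` {cs. set cs \<subseteq> {0..<m} \<and> length cs = d}"
  proof
    fix y assume "y \<in> spanx x d"
    then obtain c where c: "y = (\<Sum>i<d. of_int (c i) * x ^ i)" unfolding spanx_def by blast
    let ?cs = "map (\<lambda>i. c i mod m) [0..<d]"
    have md: "of_int (k mod m) = (of_int k :: 'a)" for k
    proof -
      have "(of_int k :: 'a) = of_int (m * (k div m) + k mod m)" by simp
      also have "\<dots> = of_int (k mod m)" by (simp only: of_int_add of_int_mult assms(1)) simp
      finally show ?thesis by simp
    qed
    have "?f ?cs = y" unfolding c by (rule sum.cong) (auto simp: md)
    moreover have "?cs \<in> {cs. set cs \<subseteq> {0..<m} \<and> length cs = d}" using assms(2) by auto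
    ultimately show "y \<in> ?f ` {cs. set cs \<subseteq> {0..<m} \<and> length cs = d}" by blast
  qed
  moreover have "finite {cs. set cs \<subseteq> {0..<m} \<and> length cs = d}"
    by (rule finite_lists_length_eq) simp
  ultimately show ?thesis by (meson finite_imageI finite_subset)
qed

lemma span_minus_pow: "(x - 1) ^ k - x ^ k \<in> spanx (x::'a::ring_1) k"
proof (induction k)
  case 0 then show ?case by (simp add: span_zero)
next
  case (Suc k)
  define w where "w = (x - 1) ^ k - x ^ k"
  have e: "(x - 1) ^ Suc k - x ^ Suc k = x * w - w - x ^ k"
  proof -
    have "(x - 1) ^ Suc k = (x - 1) * (x ^ k + w)" by (simp add: w_def)
    also have "\<dots> = x * x ^ k - x ^ k + x * w - w" by (simp add: algebra_simps)
    finally show ?thesis by simp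
  qed
  have "x * w \<in> spanx x (Suc k)" using span_xmult Suc w_def by blast
  moreover have "w \<in> spanx x (Suc k)" using span_mono[of k "Suc k"] Suc w_def by simp
  moreover have "x ^ k \<in> spanx x (Suc k)" by (rule span_pow) simp
  ultimately show ?case unfolding e by (intro span_diff)
qed

lemma span_top:
  assumes n: "n \<ge> 1" and h: "(x ^ n - 1) * ((x - 1) ^ n - 1) = (0::'a::ring_1)"
  shows "x ^ (2 * n) \<in> spanx x (2 * n)"
proof -
  define w where "w = (x - 1) ^ n - x ^ n"
  have w: "w \<in> spanx x n" unfolding w_def by (rule span_minus_pow)
  have "0 = (x ^ n - 1) * (x ^ n + w - 1)" using h by (simp add: w_def)
  also have "\<dots> = x ^ n * x ^ n + x ^ n * w - x ^ n - x ^ n - w + 1" by (simp add: algebra_simps)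
  finally have z: "x ^ n * x ^ n + x ^ n * w - x ^ n - x ^ n - w + 1 = 0" by simp
  have "x ^ n * x ^ n = (x ^ n * x ^ n + x ^ n * w - x ^ n - x ^ n - w + 1) - (x ^ n * w) + x ^ n + x ^ n + w - 1"
    by (simp add: algebra_simps)
  also have "\<dots> = - (x ^ n * w) + x ^ n + x ^ n + w - 1" unfolding z by simp
  finally have e: "x ^ (2 * n) = - (x ^ n * w) + x ^ n + x ^ n + w - 1"
    by (simp add: power_add[symmetric] mult_2)
  have a: "x ^ n * w \<in> spanx x (2 * n)" using span_powmult[OF w, of n] by (simp add: mult_2)
  have b: "x ^ n \<in> spanx x (2 * n)" using n by (intro span_pow) simp
  have c: "w \<in> spanx x (2 * n)" using span_mono[OF _ w, of "2 * n"] by simp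
  have d: "1 \<in> spanx x (2 * n)" using span_pow[of 0 "2 * n" x] n by simp
  show ?thesis unfolding e by (intro span_add span_diff span_uminus a b c d)
qed

lemma periodic:
  assumes n: "n \<ge> 1" and hyp: "\<forall>r::'a::ring_1. (r ^ n - 1) * ((r - 1) ^ n - 1) = 0"
  shows "\<exists>a b. a < b \<and> (x::'a) ^ a = x ^ b"
proof -
  define m :: int where "m = (3 ^ n - 1) * (2 ^ n - 1)"
  have "(of_int m :: 'a) = (3 ^ n - 1) * ((3 - 1) ^ n - 1)" unfolding m_def by simp
  then have m0: "(of_int m :: 'a) = 0" using hyp by metis
  have "(3::int) ^ n > 1" "(2::int) ^ n > 1" using n by (auto intro: one_less_power)
  then have mpos: "m > 0" unfolding m_def by simp
  let ?V = "spanx x (2 * n)"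
  have fin: "finite ?V" by (rule span_finite[OF m0 mpos])
  have top: "x ^ (2 * n) \<in> ?V" using span_top[OF n] hyp by blast
  have pw: "x ^ k \<in> ?V" for k
  proof (induction k)
    case 0 then show ?case using span_pow[of 0 "2 * n" x] n by simp
  next
    case (Suc k)
    then show ?case using span_shrink[OF top span_xmult[OF Suc]] by simp
  qed
  have sub: "(\<lambda>k. x ^ k) ` {..card ?V} \<subseteq> ?V" using pw by auto
  have "card ((\<lambda>k. x ^ k) ` {..card ?V}) \<le> card ?V" by (rule card_mono[OF fin sub])
  then have "card ((\<lambda>k. x ^ k) ` {..card ?V}) < card {..card ?V}" by simp
  then have "\<not> inj_on (\<lambda>k. x ^ k) {..card ?V}" by (rule pigeonhole)
  then obtain a b where "a \<noteq> b" "x ^ a = x ^ b" unfolding inj_on_def by blast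
  then show ?thesis by (metis linorder_neqE_nat)
qed


lemma li_one: "left_ideal I \<Longrightarrow> (1::'a::ring_1) \<in> I \<Longrightarrow> I = UNIV"
proof -
  assume L: "left_ideal I" and o: "1 \<in> I"
  have "r * 1 \<in> I" for r using L o unfolding left_ideal_def by blast
  then show "I = UNIV" by auto
qed

lemma exists_max:
  assumes L: "left_ideal (L::'a::ring_1 set)" and one: "1 \<notin> L"
  shows "\<exists>M. maximal_left_ideal M \<and> L \<subseteq> M"
proof -
  let ?A = "{I. left_ideal I \<and> L \<subseteq> I \<and> (1::'a) \<notin> I}"
  have "\<exists>M\<in>?A. \<forall>X\<in>?A. M \<subseteq> X \<longrightarrow> X = M"
  proof (rule subset_Zorn)
    fix C assume ch: "subset.chain ?A C"
    then have CA: "C \<subseteq> ?A" and cmp: "\<forall>X\<in>C. \<forall>Y\<in>C. X \<subseteq> Y \<or> Y \<subseteq> X"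
      by (auto simp: subset.chain_def)
    show "\<exists>U\<in>?A. \<forall>X\<in>C. X \<subseteq> U"
    proof (cases "C = {}")
      case True then show ?thesis using L one by blast
    next
      case False
      have "left_ideal (\<Union>C)"
        unfolding left_ideal_def
      proof (intro conjI ballI allI)
        obtain X where "X \<in> C" using False by blast
        then show "0 \<in> \<Union>C" using CA unfolding left_ideal_def by blast
      next
        fix x y assume "x \<in> \<Union>C" "y \<in> \<Union>C"
        then obtain X Y where XY: "X \<in> C" "Y \<in> C" "x \<in> X" "y \<in> Y" by blast
        show "x + y \<in> \<Union>C"
        proof (cases "X \<subseteq> Y")
          case True then have "x \<in> Y" using XY by blast
          then have "x + y \<in> Y" using XY CA unfolding left_ideal_def by blast
          then show ?thesis using XY by blast
        next
          case False then have "Y \<subseteq> X" using cmp XY by blast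
          then have "y \<in> X" using XY by blast
          then have "x + y \<in> X" using XY CA unfolding left_ideal_def by blast
          then show ?thesis using XY by blast
        qed
      next
        fix x assume "x \<in> \<Union>C"
        then obtain X where "X \<in> C" "x \<in> X" by blast
        then show "- x \<in> \<Union>C" using CA unfolding left_ideal_def by blast
      next
        fix r x assume "x \<in> \<Union>C"
        then obtain X where "X \<in> C" "x \<in> X" by blast
        then show "r * x \<in> \<Union>C" using CA unfolding left_ideal_def by blast
      qed
      moreover have "L \<subseteq> \<Union>C" using False CA by auto
      moreover have "1 \<notin> \<Union>C" using CA by auto
      ultimately show ?thesis by blast
    qed
  qed
  then obtain M where M: "M \<in> ?A" "\<forall>X\<in>?A. M \<subseteq> X \<longrightarrow> X = M" by blast
  have "maximal_left_ideal M"
    unfolding maximal_left_ideal_def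
  proof (intro conjI allI impI)
    show "left_ideal M" using M by simp
    show "M \<noteq> UNIV" using M by auto
    fix I assume I: "left_ideal I \<and> M \<subseteq> I \<and> I \<noteq> UNIV"
    then have "1 \<notin> I" using li_one by blast
    then show "I = M" using M I by auto
  qed
  then show ?thesis using M by blast
qed

lemma jac_lmult: "x \<in> jacobson \<Longrightarrow> r * x \<in> (jacobson::'a::ring_1 set)"
  unfolding jacobson_def maximal_left_ideal_def left_ideal_def by auto

lemma jac_left:
  assumes x: "x \<in> (jacobson::'a::ring_1 set)"
  shows "\<exists>u. u * (1 - r * x) = 1"
proof (rule ccontr)
  assume nu: "\<not> (\<exists>u. u * (1 - r * x) = 1)"
  let ?L = "{s * (1 - r * x) | s. True}"
  have L: "left_ideal ?L"
    unfolding left_ideal_def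
  proof (intro conjI ballI allI)
    have "(0::'a) = 0 * (1 - r * x)" by simp
    then show "0 \<in> ?L" by blast
  next
    fix a b assume "a \<in> ?L" "b \<in> ?L"
    then obtain s t where "a = s * (1 - r * x)" "b = t * (1 - r * x)" by blast
    then have "a + b = (s + t) * (1 - r * x)" by (simp add: distrib_right)
    then show "a + b \<in> ?L" by blast
  next
    fix a assume "a \<in> ?L"
    then obtain s where "a = s * (1 - r * x)" by blast
    then have "- a = (- s) * (1 - r * x)" by simp
    then show "- a \<in> ?L" by blast
  next
    fix t a assume "a \<in> ?L"
    then obtain s where "a = s * (1 - r * x)" by blast
    then have "t * a = (t * s) * (1 - r * x)" by (simp add: mult.assoc)
    then show "t * a \<in> ?L" by blast
  qed
  have "1 \<notin> ?L" using nu by auto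
  then obtain M where M: "maximal_left_ideal M" "?L \<subseteq> M" using exists_max[OF L] by blast
  have LM: "left_ideal M" using M(1) unfolding maximal_left_ideal_def by blast
  have "r * x \<in> M" using jac_lmult[OF x] M(1) unfolding jacobson_def by blast
  moreover have "1 * (1 - r * x) \<in> ?L" by blast
  then have "1 - r * x \<in> M" using M(2) by auto
  ultimately have "(1 - r * x) + r * x \<in> M" using LM unfolding left_ideal_def by blast
  then have "1 \<in> M" by simp
  then show False using M(1) li_one unfolding maximal_left_ideal_def by blast
qed


lemma jac_intro:
  assumes h: "\<forall>r. \<exists>u. u * (1 - r * x) = (1::'a::ring_1)"
  shows "x \<in> jacobson"
  unfolding jacobson_def
proof
  fix M :: "'a set" assume "M \<in> {M. maximal_left_ideal M}"
  then have M: "maximal_left_ideal M" by simp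
  then have LM: "left_ideal M" unfolding maximal_left_ideal_def by simp
  show "x \<in> M"
  proof (rule ccontr)
    assume xM: "x \<notin> M"
    let ?I = "{m + r * x | m r. m \<in> M}"
    have I: "left_ideal ?I"
      unfolding left_ideal_def
    proof (intro conjI ballI allI)
      have "0 \<in> M" using LM unfolding left_ideal_def by blast
      then show "0 \<in> ?I" by (intro CollectI exI[of _ 0] exI[of _ 0]) simp
    next
      fix a b assume "a \<in> ?I" "b \<in> ?I"
      then obtain m1 r1 m2 r2 where ab: "a = m1 + r1 * x" "b = m2 + r2 * x" "m1 \<in> M" "m2 \<in> M" by blast
      then have "a + b = (m1 + m2) + (r1 + r2) * x" by (simp add: algebra_simps)
      moreover have "m1 + m2 \<in> M" using ab LM unfolding left_ideal_def by blast
      ultimately show "a + b \<in> ?I" by blast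
    next
      fix a assume "a \<in> ?I"
      then obtain m1 r1 where ab: "a = m1 + r1 * x" "m1 \<in> M" by blast
      then have "- a = (- m1) + (- r1) * x" by simp
      moreover have "- m1 \<in> M" using ab LM unfolding left_ideal_def by blast
      ultimately show "- a \<in> ?I" by blast
    next
      fix t a assume "a \<in> ?I"
      then obtain m1 r1 where ab: "a = m1 + r1 * x" "m1 \<in> M" by blast
      then have "t * a = (t * m1) + (t * r1) * x" by (simp add: algebra_simps)
      moreover have "t * m1 \<in> M" using ab LM unfolding left_ideal_def by blast
      ultimately show "t * a \<in> ?I" by blast
    qed
    have sub: "M \<subseteq> ?I"
    proof
      fix m assume "m \<in> M" then show "m \<in> ?I" by (intro CollectI exI[of _ m] exI[of _ 0]) simp
    qed
    have "0 \<in> M" using LM unfolding left_ideal_def by blast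
    then have "x \<in> ?I" by (intro CollectI exI[of _ 0] exI[of _ 1]) simp
    then have "?I \<noteq> M" using xM by blast
    moreover have "\<forall>I. left_ideal I \<and> M \<subseteq> I \<and> I \<noteq> UNIV \<longrightarrow> I = M"
      using M unfolding maximal_left_ideal_def by blast
    ultimately have "?I = UNIV" using I sub by blast
    then have "1 \<in> ?I" by simp
    then obtain m r where mr: "1 = m + r * x" "m \<in> M" by blast
    obtain u where u: "u * (1 - r * x) = 1" using h by blast
    have "m = 1 - r * x" using mr(1) by (simp add: eq_diff_eq)
    then have "u * m = 1" using u by simp
    moreover have "u * m \<in> M" using mr(2) LM unfolding left_ideal_def by blast
    ultimately have "1 \<in> M" by simp
    then show False using li_one[OF LM] M unfolding maximal_left_ideal_def by blast
  qed
qed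


lemma jac_unit:
  assumes y: "y \<in> (jacobson::'a::ring_1 set)"
  shows "\<exists>v. v * (1 - y) = 1 \<and> (1 - y) * v = 1"
proof -
  obtain u where u: "u * (1 - 1 * y) = 1" using jac_left[OF y] by blast
  then have "u - u * y = 1" by (simp add: right_diff_distrib)
  then have "u = 1 + u * y" by (simp add: diff_eq_eq)
  then have u2: "u = 1 - (- u) * y" by simp
  obtain v where v: "v * (1 - (- u) * y) = 1" using jac_left[OF y] by blast
  then have vu: "v * u = 1" using u2 by simp
  have "v = v * (u * (1 - y))" using u by simp
  also have "\<dots> = 1 - y" using vu by (simp add: mult.assoc[symmetric])
  finally show ?thesis using u vu by auto
qed

lemma jac_rmult:
  assumes x: "x \<in> (jacobson::'a::ring_1 set)"
  shows "x * r \<in> jacobson"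
proof (rule jac_intro, rule allI)
  fix s
  obtain w where w: "w * (1 - (r * s) * x) = 1" "(1 - (r * s) * x) * w = 1"
    using jac_unit[OF jac_lmult[OF x]] by blast
  have e1: "(1 + s * x * w * r) * (1 - s * (x * r)) = 1 - s * x * r + (s * x * w * r - s * x * w * r * (s * (x * r)))"
    by (simp add: distrib_right left_diff_distrib right_diff_distrib mult.assoc)
  have e2: "s * x * w * r - s * x * w * r * (s * (x * r)) = s * x * (w * (1 - r * s * x)) * r"
    by (simp add: left_diff_distrib right_diff_distrib mult.assoc)
  have e3: "s * x * (w * (1 - r * s * x)) * r = s * x * r" using w(1) by simp
  have "(1 + s * x * w * r) * (1 - s * (x * r)) = 1 - s * x * r + s * x * (w * (1 - r * s * x)) * r"
    unfolding e1 e2 ..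
  also have "\<dots> = 1" unfolding e3 by simp
  finally show "\<exists>u. u * (1 - s * (x * r)) = 1" by blast
qed

lemma jac_ideal: "ideal2 (jacobson::'a::ring_1 set)"
  unfolding ideal2_def
proof (intro conjI allI ballI)
  show "left_ideal (jacobson::'a set)"
  proof -
    have LM: "left_ideal M" if "M \<in> {M. maximal_left_ideal M}" for M :: "'a set"
      using that unfolding maximal_left_ideal_def by blast
    show ?thesis unfolding left_ideal_def jacobson_def
    proof (intro conjI ballI allI)
      show "(0::'a) \<in> \<Inter> {M. maximal_left_ideal M}"
      proof (rule InterI)
        fix M :: "'a set" assume "M \<in> {M. maximal_left_ideal M}"
        then show "0 \<in> M" using LM unfolding left_ideal_def by blast
      qed
    next
      fix x y :: 'a assume h: "x \<in> \<Inter> {M. maximal_left_ideal M}" "y \<in> \<Inter> {M. maximal_left_ideal M}"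
      show "x + y \<in> \<Inter> {M. maximal_left_ideal M}"
      proof (rule InterI)
        fix M :: "'a set" assume M: "M \<in> {M. maximal_left_ideal M}"
        then have "x \<in> M" "y \<in> M" using h by blast+
        then show "x + y \<in> M" using LM[OF M] unfolding left_ideal_def by blast
      qed
    next
      fix x :: 'a assume h: "x \<in> \<Inter> {M. maximal_left_ideal M}"
      show "- x \<in> \<Inter> {M. maximal_left_ideal M}"
      proof (rule InterI)
        fix M :: "'a set" assume M: "M \<in> {M. maximal_left_ideal M}"
        then have "x \<in> M" using h by blast
        then show "- x \<in> M" using LM[OF M] unfolding left_ideal_def by blast
      qed
    next
      fix r x :: 'a assume h: "x \<in> \<Inter> {M. maximal_left_ideal M}"
      show "r * x \<in> \<Inter> {M. maximal_left_ideal M}"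
      proof (rule InterI)
        fix M :: "'a set" assume M: "M \<in> {M. maximal_left_ideal M}"
        then have "x \<in> M" using h by blast
        then show "r * x \<in> M" using LM[OF M] unfolding left_ideal_def by blast
      qed
    qed
  qed
next
  fix r x assume "x \<in> (jacobson::'a set)" then show "x * r \<in> jacobson" by (rule jac_rmult)
qed

lemma jac_nil:
  assumes n: "n \<ge> 1" and hyp: "\<forall>r::'a::ring_1. (r ^ n - 1) * ((r - 1) ^ n - 1) = 0"
  shows "nil_set (jacobson :: 'a set)"
  unfolding nil_set_def
proof
  fix x :: 'a assume x: "x \<in> jacobson"
  obtain a b where ab: "a < b" "x ^ a = x ^ b" using periodic[OF n hyp] by blast
  define c where "c = b - a"
  have cab: "c + a = b" using ab by (simp add: c_def)
  have c1: "c \<ge> 1" using ab(1) by (simp add: c_def)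
  have "x ^ c * x ^ a = x ^ (c + a)" by (simp only: power_add)
  then have c: "c \<ge> 1" "x ^ c * x ^ a = x ^ b" using c1 cab by simp_all
  have "Suc (c - 1) = c" using c(1) by simp
  then have "x ^ c = x ^ (c - 1) * x" using power_Suc2[of x "c - 1"] by simp
  then have "x ^ c \<in> jacobson" using jac_lmult[OF x] by simp
  then obtain v where v: "v * (1 - x ^ c) = 1" using jac_unit by blast
  have "(1 - x ^ c) * x ^ a = x ^ a - x ^ c * x ^ a" by (simp add: left_diff_distrib)
  also have "\<dots> = x ^ a - x ^ b" by (simp only: c(2))
  also have "\<dots> = x ^ b - x ^ b" by (simp only: ab(2))
  also have "\<dots> = 0" by simp
  finally have "(1 - x ^ c) * x ^ a = 0" .
  then have "x ^ a = 0" using v by (metis mult.assoc mult_1 mult_zero_right)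
  then show "\<exists>k. x ^ k = 0" by blast
qed


lemma pow_sq0: "y * y = 0 \<Longrightarrow> (1 + y) ^ k = 1 + of_nat k * (y::'a::ring_1)"
proof (induction k)
  case 0 then show ?case by simp
next
  case (Suc k)
  have "(1 + y) ^ Suc k = (1 + y) * (1 + of_nat k * y)" using Suc by simp
  also have "\<dots> = 1 + of_nat k * y + y + y * (of_nat k * y)" by (simp add: algebra_simps)
  also have "y * (of_nat k * y) = of_nat k * (y * y)"
    by (metis mult.assoc mult_of_nat_commute)
  finally show ?case using Suc.prems by (simp add: algebra_simps)
qed

lemma sq0_nmult:
  assumes n: "n \<ge> 1" and hyp: "\<forall>r::'a::ring_1. (r ^ n - 1) * ((r - 1) ^ n - 1) = 0"
    and y: "y * y = (0::'a)"
  shows "of_nat n * y = 0"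
proof -
  have h: "((1 + y) ^ n - 1) * ((1 + y - 1) ^ n - 1) = 0" using hyp by blast
  have yn: "y * y ^ n = 0"
  proof -
    have "y * y ^ n = y * (y * y ^ (n - 1))" using n by (metis Suc_diff_le diff_Suc_1 power_Suc)
    also have "\<dots> = 0" using y by (simp add: mult.assoc[symmetric])
    finally show ?thesis .
  qed
  have "0 = (of_nat n * y) * (y ^ n - 1)" using h pow_sq0[OF y, of n] by simp
  also have "\<dots> = of_nat n * (y * y ^ n) - of_nat n * y" by (simp add: algebra_simps)
  also have "\<dots> = - (of_nat n * y)" using yn by simp
  finally show ?thesis by simp
qed

lemma two_zero:
  assumes n: "n \<ge> 1" and odd: "odd n" and hyp: "\<forall>r::'a::ring_1. (r ^ n - 1) * ((r - 1) ^ n - 1) = 0"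
  shows "(2::'a) = 0"
proof -
  have h: "((0::'a) ^ n - 1) * ((0 - 1) ^ n - 1) = 0" using hyp by blast
  have "(0::'a) ^ n = 0" using n by (simp add: power_0_left)
  moreover have "(0 - 1::'a) ^ n = -1" using odd by simp
  ultimately show ?thesis using h by simp
qed

lemma of_int_mod2: "(2::'a::ring_1) = 0 \<Longrightarrow> (of_int k :: 'a) = of_int (k mod 2)"
proof -
  assume t: "(2::'a) = 0"
  have "(of_int k :: 'a) = of_int (2 * (k div 2) + k mod 2)" by simp
  also have "\<dots> = of_int (k mod 2)" by (simp only: of_int_add of_int_mult) (simp add: t)
  finally show ?thesis .
qed

lemma odd_part:
  assumes n: "n \<ge> 1" and odd: "odd n" and hyp: "\<forall>r::'a::ring_1. (r ^ n - 1) * ((r - 1) ^ n - 1) = 0"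
  shows "reduced_ring TYPE('a) \<and> card (char_set TYPE('a)) = 2 \<and> (jacobson :: 'a set) = {0}"
proof -
  have t: "(2::'a) = 0" by (rule two_zero[OF n odd hyp])
  have nn: "(of_nat n :: 'a) = 1"
  proof -
    have "(of_nat n :: 'a) = of_int (int n)" by simp
    also have "\<dots> = of_int (int n mod 2)" by (rule of_int_mod2[OF t])
    also have "int n mod 2 = 1" using odd by presburger
    finally show ?thesis by simp
  qed
  have sq: "y * y = 0 \<Longrightarrow> y = 0" for y :: 'a
    using sq0_nmult[OF n hyp, of y] nn by simp
  have red: "\<forall>x::'a. x ^ k = 0 \<longrightarrow> x = 0" for k
  proof (induction k rule: less_induct)
    case (less k)
    show ?case
    proof (intro allI impI)
      fix x :: 'a assume xk: "x ^ k = 0"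
      show "x = 0"
      proof (cases "k \<le> 1")
        case True
        then have "k = 0 \<or> k = 1" by auto
        then show ?thesis using xk by auto
      next
        case False
        have ee: "(k - 1) + (k - 1) = k + (k - 2)" using False by arith
        have "x ^ (k - 1) * x ^ (k - 1) = x ^ k * x ^ (k - 2)"
          by (simp only: power_add[symmetric] ee)
        then have "x ^ (k - 1) = 0" using sq[of "x ^ (k - 1)"] xk by simp
        moreover have "k - 1 < k" using False by simp
        ultimately show ?thesis using less.IH by blast
      qed
    qed
  qed
  have R: "reduced_ring TYPE('a)" unfolding reduced_ring_def using red by blast
  have "char_set TYPE('a) = {0, 1}"
  proof
    show "char_set TYPE('a) \<subseteq> {0, 1}"
    proof
      fix z assume "z \<in> char_set TYPE('a)"
      then obtain k where "z = of_int k" unfolding char_set_def by blast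
      then have "z = of_int (k mod 2)" using of_int_mod2[OF t] by simp
      moreover have "k mod 2 = 0 \<or> k mod 2 = 1" by presburger
      ultimately show "z \<in> {0, 1}" by auto
    qed
    show "{0, 1} \<subseteq> char_set TYPE('a)" unfolding char_set_def
      by (auto intro: range_eqI[of _ _ 0] range_eqI[of _ _ 1])
  qed
  then have C: "card (char_set TYPE('a)) = 2" by simp
  have J: "(jacobson :: 'a set) = {0}"
  proof
    show "(jacobson :: 'a set) \<subseteq> {0}"
    proof
      fix x :: 'a assume "x \<in> jacobson"
      then obtain k where "x ^ k = 0" using jac_nil[OF n hyp] unfolding nil_set_def by blast
      then show "x \<in> {0}" using red by blast
    qed
    show "{0} \<subseteq> (jacobson :: 'a set)"
      using jac_ideal unfolding ideal2_def left_ideal_def by blast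
  qed
  show ?thesis using R C J by blast
qed

lemma nonabelian_sq0:
  assumes "\<not> abelian_ring TYPE('a::ring_1)"
  shows "\<exists>a::'a. a \<noteq> 0 \<and> a * a = 0"
proof -
  obtain e x :: 'a where e: "e * e = e" "e * x \<noteq> x * e"
    using assms unfolding abelian_ring_def by blast
  let ?a1 = "e * x * (1 - e)" and ?a2 = "(1 - e) * x * e"
  have d: "?a1 - ?a2 = e * x - x * e" by (simp add: algebra_simps)
  have oe: "(1 - e) * e = 0" "e * (1 - e) = 0" using e(1) by (simp_all add: algebra_simps)
  have s1: "?a1 * ?a1 = 0"
  proof -
    have "?a1 * ?a1 = e * x * ((1 - e) * e) * x * (1 - e)" by (simp add: mult.assoc)
    then show ?thesis using oe by simp
  qed
  have s2: "?a2 * ?a2 = 0"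
  proof -
    have "?a2 * ?a2 = (1 - e) * x * (e * (1 - e)) * x * e" by (simp add: mult.assoc)
    then show ?thesis using oe by simp
  qed
  have "?a1 \<noteq> 0 \<or> ?a2 \<noteq> 0" using d e(2) by auto
  then show ?thesis using s1 s2 by blast
qed

lemma alg_part:
  assumes n: "n \<ge> 1" and hyp: "\<forall>r::'a::ring_1. (r ^ n - 1) * ((r - 1) ^ n - 1) = 0"
    and sc: "is_algebra (sc :: 'f::field \<Rightarrow> 'a \<Rightarrow> 'a)"
  shows "abelian_ring TYPE('a) \<or> CHAR('f) dvd n"
proof (rule ccontr)
  assume "\<not> (abelian_ring TYPE('a) \<or> CHAR('f) dvd n)"
  then have na: "\<not> abelian_ring TYPE('a)" and nd: "(of_nat n :: 'f) \<noteq> 0"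
    by (auto simp: of_nat_eq_0_iff_char_dvd)
  obtain a :: 'a where a: "a \<noteq> 0" "a * a = 0" using nonabelian_sq0[OF na] by blast
  have na0: "of_nat n * a = 0" by (rule sq0_nmult[OF n hyp a(2)])
  have add1: "sc c (y + z) = sc c y + sc c z" for c y z using sc unfolding is_algebra_def by blast
  have add2: "sc (c + d) y = sc c y + sc d y" for c d y using sc unfolding is_algebra_def by blast
  have comp: "sc c (sc d y) = sc (c * d) y" for c d y using sc unfolding is_algebra_def by blast
  have one: "sc 1 y = y" for y using sc unfolding is_algebra_def by blast
  have sc0: "sc c 0 = 0" for c using add1[of c 0 0] by simp
  have scn: "sc (of_nat k) y = of_nat k * y" for k y
  proof (induction k)
    case 0
    have "sc 0 y = sc 0 y + sc 0 y" using add2[of 0 0 y] by simp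
    then show ?case by simp
  next
    case (Suc k)
    then show ?case using add2[of 1 "of_nat k" y] one by (simp add: distrib_right)
  qed
  have "a = sc (inverse (of_nat n) * of_nat n) a" using nd one by simp
  also have "\<dots> = sc (inverse (of_nat n)) (sc (of_nat n) a)" by (simp add: comp)
  also have "\<dots> = 0" using scn na0 sc0 by simp
  finally show False using a(1) by simp
qed


lemma char_finite:
  assumes n: "n \<ge> 1" and hyp: "\<forall>r::'a::ring_1. (r ^ n - 1) * ((r - 1) ^ n - 1) = 0"
  shows "finite (char_set TYPE('a))"
proof -
  define m :: int where "m = (3 ^ n - 1) * (2 ^ n - 1)"
  have "(of_int m :: 'a) = (3 ^ n - 1) * ((3 - 1) ^ n - 1)" unfolding m_def by simp
  then have m0: "(of_int m :: 'a) = 0" using hyp by metis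
  have "(3::int) ^ n > 1" "(2::int) ^ n > 1" using n by (auto intro: one_less_power)
  then have mpos: "m > 0" unfolding m_def by simp
  have "char_set TYPE('a) \<subseteq> (of_int :: int \<Rightarrow> 'a) ` {0..<m}"
  proof
    fix z assume "z \<in> char_set TYPE('a)"
    then obtain k where z: "z = (of_int k :: 'a)" unfolding char_set_def by blast
    have "(of_int k :: 'a) = of_int (m * (k div m) + k mod m)" by simp
    also have "\<dots> = of_int (k mod m)" by (simp only: of_int_add of_int_mult m0) simp
    finally have "z = of_int (k mod m)" using z by simp
    moreover have "k mod m \<in> {0..<m}" using mpos by simp
    ultimately show "z \<in> (of_int :: int \<Rightarrow> 'a) ` {0..<m}" by blast
  qed
  then show ?thesis by (rule finite_subset) simp
qed

theorem lemma2p2: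
  fixes n :: nat
  assumes n_pos: "n \<ge> 1"
    and hyp: "\<forall>r::'a::ring_1. (r ^ n - 1) * ((r - 1) ^ n - 1) = 0"
  shows "(finite (char_set TYPE('a)) \<and> ideal2 (jacobson :: 'a set) \<and> nil_set (jacobson :: 'a set))
    \<and> (odd n \<longrightarrow> reduced_ring TYPE('a) \<and> card (char_set TYPE('a)) = 2
           \<and> (jacobson :: 'a set) = {0})
    \<and> (\<forall>sc :: 'f::field \<Rightarrow> 'a \<Rightarrow> 'a. is_algebra sc \<longrightarrow>
           abelian_ring TYPE('a) \<or> CHAR('f) dvd n)"
  using char_finite[OF n_pos hyp] jac_ideal[where 'a='a] jac_nil[OF n_pos hyp]
    odd_part[OF n_pos _ hyp] alg_part[OF n_pos hyp]
  by blast

end
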